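(* Let $E$ be a system of partial differential equations with independent variables $x\in\mathbb{R}^n$ and dependent variables $u\in\mathbb{R}^m$ admitting a Lie algebra $N$ of infinitesimal point transformations, and let $H$ be an ideal of $N$ with $\operatorname{rank} H(\xi)\neq\operatorname{rank} H(\xi,\eta)$. For an $N/H$-invariant solution of the factor-system $E/H$ (of the $H$-partially invariant solution) to exist, the following condition must be satisfied: $$\operatorname{rank} N(\xi,\eta)-\operatorname{rank} N(\xi)=\operatorname{rank} H(\xi,\eta)-\operatorname{rank} H(\xi).$$
   Context: Generators have the form $X=\xi^i(x,u)\partial_{x^i}+\eta^k(x,u)\partial_{u^k}$. For a Lie algebra $M$ with basis $X_1,\dots,X_k$, $M(\xi)$ is the $k\times n$ matrix $(\xi^i_\alpha)$ and $M(\xi,\eta)$ the $k\times(n+m)$ matrix $(\xi^i_\alpha,\eta^j_\alpha)$; "rank" of such a matrix means its maximal rank over points. An $H$-invariant solution is one whose graph is invariant under $H$; the necessary condition for its existence used in this theory is $\operatorname{rank}H(\xi)=\operatorname{rank}H(\xi,\eta)$. For an $H$-partially invariant solution one takes the invariants of $H$: $\lambda^1(x),\dots,\lambda^\sigma(x)$ depending only on $x$ ($\sigma=n-\operatorname{rank}H(\xi)$) and $I^1(x,u),\dots,I^\mu(x,u)$ with $\operatorname{rank}\partial I/\partial u=\mu$ ($\mu=m+n-\operatorname{rank}H(\xi,\eta)-\sigma$); the orbit of the solution is written as relations among these invariants, the remaining (non-invariant) dependent functions are arbitrary functions of $x$, and substitution into $E$ yields a factor-system $E/H$ for the invariant functions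 of the invariant variables (plus a system for the non-invariant functions). The factor algebra $N/H$ acts, by its induced action, on the space of invariants of $H$; an $N/H$-invariant solution of $E/H$ is a solution of $E/H$ invariant under this induced action. *)

theory Defs
  imports "HOL-Analysis.Analysis"
begin

(* Points of the space of independent and dependent variables: (x,u) in R^n x R^m.
   A generator X = xi^i d_{x^i} + eta^k d_{u^k} is represented as the map
   p \<mapsto> (xi(p), eta(p)). *)
type_synonym ('n,'m) pt = "(real^'n) \<times> (real^'m)"
type_synonym ('n,'m) field = "('n::finite,'m::finite) pt \<Rightarrow> ('n,'m) pt"

definition row_rank :: "nat \<Rightarrow> 'c set \<Rightarrow> (nat \<Rightarrow> 'c \<Rightarrow> real) \<Rightarrow> nat" where
  "row_rank r C M = Max {card S | S. S \<subseteq> {..<r} \<and>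
     (\<forall>a. (\<forall>j\<in>C. (\<Sum>i\<in>S. a i * M i j) = 0) \<longrightarrow> (\<forall>i\<in>S. a i = 0))}"

(* "rank" of a point-dependent matrix: maximal rank over the points of D *)
definition max_rank :: "'p set \<Rightarrow> nat \<Rightarrow> 'c set \<Rightarrow> ('p \<Rightarrow> nat \<Rightarrow> 'c \<Rightarrow> real) \<Rightarrow> nat" where
  "max_rank D r C M = Max ((\<lambda>p. row_rank r C (M p)) ` D)"

definition xi_mat :: "(nat \<Rightarrow> ('n::finite,'m::finite) field) \<Rightarrow> ('n::finite,'m::finite) pt \<Rightarrow> nat \<Rightarrow> 'n \<Rightarrow> real" where
  "xi_mat X p a i = fst (X a p) $ i"

definition xieta_mat :: "(nat \<Rightarrow> ('n::finite,'m::finite) field) \<Rightarrow> ('n::finite,'m::finite) pt \<Rightarrow> nat \<Rightarrow> 'n + 'm \<Rightarrow> real" where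
  "xieta_mat X p a c = (case c of Inl i \<Rightarrow> fst (X a p) $ i | Inr j \<Rightarrow> snd (X a p) $ j)"

definition rank_xi :: "('n::finite,'m::finite) pt set \<Rightarrow> nat \<Rightarrow> (nat \<Rightarrow> ('n::finite,'m::finite) field) \<Rightarrow> nat" where
  "rank_xi D k X = max_rank D k UNIV (xi_mat X)"

definition rank_xieta :: "('n::finite,'m::finite) pt set \<Rightarrow> nat \<Rightarrow> (nat \<Rightarrow> ('n::finite,'m::finite) field) \<Rightarrow> nat" where
  "rank_xieta D k X = max_rank D k UNIV (xieta_mat X)"

definition lie_bracket :: "('n::finite,'m::finite) field \<Rightarrow> ('n,'m) field \<Rightarrow> ('n,'m) field" where
  "lie_bracket X Y p = frechet_derivative Y (at p) (X p) - frechet_derivative X (at p) (Y p)"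

definition lie_algebra_basis :: "('n::finite,'m::finite) pt set \<Rightarrow> nat \<Rightarrow> (nat \<Rightarrow> ('n::finite,'m::finite) field) \<Rightarrow> bool" where
  "lie_algebra_basis D k X \<longleftrightarrow>
     (\<forall>a<k. \<forall>p\<in>D. X a differentiable (at p)) \<and>
     (\<forall>c. (\<forall>p\<in>D. (\<Sum>a<k. c a *\<^sub>R X a p) = 0) \<longrightarrow> (\<forall>a<k. c a = 0)) \<and>
     (\<forall>a<k. \<forall>b<k. \<exists>c. \<forall>p\<in>D. lie_bracket (X a) (X b) p = (\<Sum>g<k. c g *\<^sub>R X g p))"

definition ideal_basis :: "('n::finite,'m::finite) pt set \<Rightarrow> nat \<Rightarrow> (nat \<Rightarrow> ('n::finite,'m::finite) field) \<Rightarrow> nat \<Rightarrow> (nat \<Rightarrow> ('n::finite,'m::finite) field) \<Rightarrow> bool" where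
  "ideal_basis D k X kH Y \<longleftrightarrow>
     lie_algebra_basis D kH Y \<and>
     (\<forall>b<kH. \<exists>c. \<forall>p\<in>D. Y b p = (\<Sum>a<k. c a *\<^sub>R X a p)) \<and>
     (\<forall>a<k. \<forall>b<kH. \<exists>c. \<forall>p\<in>D. lie_bracket (X a) (Y b) p = (\<Sum>g<kH. c g *\<^sub>R Y g p))"

(* regularity (standing assumption of the local theory): the ranks of H(xi) and
   H(xi,eta) are attained at every point of D *)
definition regular_ranks :: "('n::finite,'m::finite) pt set \<Rightarrow> nat \<Rightarrow> (nat \<Rightarrow> ('n::finite,'m::finite) field) \<Rightarrow> bool" where
  "regular_ranks D k X \<longleftrightarrow>
     (\<forall>p\<in>D. row_rank k UNIV (xi_mat X p) = rank_xi D k X \<and>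
              row_rank k UNIV (xieta_mat X p) = rank_xieta D k X)"

(* lam 0..lam(\<sigma>-1): invariants of H depending only on x, independent,
   \<sigma> = n - rank H(xi);
   I 0..I(\<mu>-1): invariants of H with rank dI/du = \<mu>,
   \<mu> = m + n - rank H(xi,eta) - \<sigma> *)
definition H_invariants ::
  "('n::finite,'m::finite) pt set \<Rightarrow> nat \<Rightarrow> (nat \<Rightarrow> ('n::finite,'m::finite) field) \<Rightarrow>
   nat \<Rightarrow> (nat \<Rightarrow> real^'n \<Rightarrow> real) \<Rightarrow> nat \<Rightarrow> (nat \<Rightarrow> ('n::finite,'m::finite) pt \<Rightarrow> real) \<Rightarrow> bool" where
  "H_invariants D kH Y \<sigma> lam \<mu> I \<longleftrightarrow>
     \<sigma> = CARD('n) - rank_xi D kH Y \<and>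
     \<mu> = CARD('m) + CARD('n) - rank_xieta D kH Y - \<sigma> \<and>
     (\<forall>j<\<sigma>. \<forall>p\<in>D. lam j differentiable (at (fst p)) \<and>
        (\<forall>b<kH. frechet_derivative (lam j) (at (fst p)) (fst (Y b p)) = 0)) \<and>
     (\<forall>l<\<mu>. \<forall>p\<in>D. I l differentiable (at p) \<and>
        (\<forall>b<kH. frechet_derivative (I l) (at p) (Y b p) = 0)) \<and>
     (\<forall>p\<in>D. \<forall>c. (\<forall>v. (\<Sum>j<\<sigma>. c j * frechet_derivative (lam j) (at (fst p)) v) = 0)
                 \<longrightarrow> (\<forall>j<\<sigma>. c j = 0)) \<and>
     (\<forall>p\<in>D. \<forall>c. (\<forall>w. (\<Sum>l<\<mu>. c l * frechet_derivative (I l) (at p) (0, w)) = 0)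
                 \<longrightarrow> (\<forall>l<\<mu>. c l = 0))"

(* Induced action of N on the invariants of H: coefficients of the generator
   induced by X a on the invariant independent variables lam and on the
   invariant dependent variables I *)
definition induced_xi :: "(nat \<Rightarrow> real^'n \<Rightarrow> real) \<Rightarrow> (nat \<Rightarrow> ('n::finite,'m::finite) field) \<Rightarrow>
   ('n::finite,'m::finite) pt \<Rightarrow> nat \<Rightarrow> nat \<Rightarrow> real" where
  "induced_xi lam X p a j = frechet_derivative (lam j) (at (fst p)) (fst (X a p))"

definition induced_xieta :: "(nat \<Rightarrow> real^'n \<Rightarrow> real) \<Rightarrow> (nat \<Rightarrow> ('n::finite,'m::finite) pt \<Rightarrow> real) \<Rightarrow>
   (nat \<Rightarrow> ('n::finite,'m::finite) field) \<Rightarrow> ('n::finite,'m::finite) pt \<Rightarrow> nat \<Rightarrow> nat + nat \<Rightarrow> real" where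
  "induced_xieta lam I X p a c = (case c of
      Inl j \<Rightarrow> frechet_derivative (lam j) (at (fst p)) (fst (X a p))
    | Inr l \<Rightarrow> frechet_derivative (I l) (at p) (X a p))"

(* Necessary condition (used in this theory) for the existence of an
   N/H-invariant solution of the factor system E/H: for the induced action,
   rank (N/H)(xi~) = rank (N/H)(xi~, eta~). *)
definition NH_invariant_solution_condition ::
  "('n::finite,'m::finite) pt set \<Rightarrow> nat \<Rightarrow> (nat \<Rightarrow> ('n::finite,'m::finite) field) \<Rightarrow>
   nat \<Rightarrow> (nat \<Rightarrow> real^'n \<Rightarrow> real) \<Rightarrow> nat \<Rightarrow> (nat \<Rightarrow> ('n::finite,'m::finite) pt \<Rightarrow> real) \<Rightarrow> bool" where
  "NH_invariant_solution_condition D k X \<sigma> lam \<mu> I \<longleftrightarrow>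
     max_rank D k {..<\<sigma>} (induced_xi lam X) =
     max_rank D k (Inl ` {..<\<sigma>} \<union> Inr ` {..<\<mu>}) (induced_xieta lam I X)"

end

theory Submission
  imports Defs
begin


lemma indep_mod:
  fixes x :: "'i \<Rightarrow> 'v::euclidean_space"
  assumes fin: "finite S" and K: "subspace K" and BK: "B \<subseteq> K" and iB: "independent B"
    and ind: "\<And>a. (\<Sum>i\<in>S. a i *\<^sub>R x i) \<in> K \<Longrightarrow> \<forall>i\<in>S. a i = 0"
  shows "inj_on x S" "x ` S \<inter> B = {}" "independent (x ` S \<union> B)"
proof -
  show inj: "inj_on x S"
  proof (rule inj_onI, rule ccontr)
    fix i j assume ij: "i \<in> S" "j \<in> S" "x i = x j" "i \<noteq> j"
    define a where "a = (\<lambda>t. if t = i then 1 else if t = j then -1 else (0::real))"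
    have "(\<Sum>t\<in>S. a t *\<^sub>R x t) = (\<Sum>t\<in>{i,j}. a t *\<^sub>R x t)"
      by (rule sum.mono_neutral_right) (use fin ij in \<open>auto simp: a_def\<close>)
    also have "\<dots> = 0" using ij by (simp add: a_def)
    finally have "(\<Sum>t\<in>S. a t *\<^sub>R x t) \<in> K" using K subspace_0 by auto
    then have "\<forall>t\<in>S. a t = 0" by (rule ind)
    then have "a i = 0" using ij by blast
    then show False by (simp add: a_def)
  qed
  show disj: "x ` S \<inter> B = {}"
  proof (rule ccontr)
    assume "x ` S \<inter> B \<noteq> {}"
    then obtain i where i: "i \<in> S" "x i \<in> K" using BK by auto
    define a where "a = (\<lambda>t. if t = i then 1 else (0::real))"
    have "(\<Sum>t\<in>S. a t *\<^sub>R x t) = (\<Sum>t\<in>{i}. a t *\<^sub>R x t)"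
      by (rule sum.mono_neutral_right) (use fin i in \<open>auto simp: a_def\<close>)
    also have "\<dots> = x i" by (simp add: a_def)
    finally have "(\<Sum>t\<in>S. a t *\<^sub>R x t) \<in> K" using i by auto
    then have "\<forall>t\<in>S. a t = 0" by (rule ind)
    then have "a i = 0" using i by blast
    then show False by (simp add: a_def)
  qed
  have finB: "finite B" using iB independent_bound_general by blast
  show "independent (x ` S \<union> B)"
    unfolding independent_explicit
  proof (intro conjI allI impI)
    show "finite (x ` S \<union> B)" using fin finB by auto
    fix c assume c0: "(\<Sum>v\<in>x ` S \<union> B. c v *\<^sub>R v) = 0"
    have split: "(\<Sum>v\<in>x ` S \<union> B. c v *\<^sub>R v) = (\<Sum>v\<in>x ` S. c v *\<^sub>R v) + (\<Sum>v\<in>B. c v *\<^sub>R v)"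
      by (rule sum.union_disjoint) (use fin finB disj in auto)
    have re: "(\<Sum>v\<in>x ` S. c v *\<^sub>R v) = (\<Sum>i\<in>S. c (x i) *\<^sub>R x i)"
      using sum.reindex[OF inj, of "\<lambda>v. c v *\<^sub>R v"] by simp
    have inK: "(\<Sum>v\<in>B. c v *\<^sub>R v) \<in> K"
      by (rule subspace_sum[OF K]) (use BK K subspace_scale in blast)
    have "(\<Sum>i\<in>S. c (x i) *\<^sub>R x i) = - (\<Sum>v\<in>B. c v *\<^sub>R v)"
      using c0 split re by (simp add: eq_neg_iff_add_eq_0)
    also have "\<dots> \<in> K" using inK K subspace_neg by blast
    finally have z: "\<forall>i\<in>S. c (x i) = 0" using ind[of "\<lambda>i. c (x i)"] by blast
    then have "(\<Sum>v\<in>x ` S. c v *\<^sub>R v) = 0" using re by simp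
    then have "(\<Sum>v\<in>B. c v *\<^sub>R v) = 0" using c0 split by simp
    then have "\<forall>v\<in>B. c v = 0" using iB unfolding independent_explicit by blast
    with z show "\<forall>v\<in>x ` S \<union> B. c v = 0" by blast
  qed
qed

lemma row_rank_mod:
  fixes x :: "nat \<Rightarrow> 'v::euclidean_space"
  assumes K: "subspace K"
    and char: "\<And>S a. S \<subseteq> {..<r} \<Longrightarrow>
       (\<forall>j\<in>C. (\<Sum>i\<in>S. a i * M i j) = 0) \<longleftrightarrow> (\<Sum>i\<in>S. a i *\<^sub>R x i) \<in> K"
  shows "row_rank r C M = dim (x ` {..<r} \<union> K) - dim K"
proof -
  obtain B where B: "B \<subseteq> K" "independent B" "K \<subseteq> span B" "card B = dim K"
    using basis_exists by blast
  have finB: "finite B" using B(2) independent_bound_general by blast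
  let ?A = "{card S | S. S \<subseteq> {..<r} \<and>
     (\<forall>a. (\<forall>j\<in>C. (\<Sum>i\<in>S. a i * M i j) = 0) \<longrightarrow> (\<forall>i\<in>S. a i = 0))}"
  let ?d = "dim (x ` {..<r} \<union> K) - dim K"
  have up: "n \<le> ?d" if "n \<in> ?A" for n
  proof -
    from that obtain S where S: "n = card S" "S \<subseteq> {..<r}"
      "\<forall>a. (\<forall>j\<in>C. (\<Sum>i\<in>S. a i * M i j) = 0) \<longrightarrow> (\<forall>i\<in>S. a i = 0)" by blast
    have finS: "finite S" using S(2) finite_subset by blast
    have ind: "\<forall>i\<in>S. a i = 0" if "(\<Sum>i\<in>S. a i *\<^sub>R x i) \<in> K" for a
      using S(3) char[OF S(2)] that by blast
    note im = indep_mod[OF finS K B(1) B(2) ind]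
    have "card (x ` S \<union> B) \<le> dim (x ` {..<r} \<union> K)"
      apply (rule independent_card_le_dim[OF _ im(3)])
      using S(2) B(1) by auto
    moreover have "card (x ` S \<union> B) = card S + card B"
      using card_Un_disjoint[OF _ finB im(2)] finS card_image[OF im(1)] by simp
    ultimately show ?thesis using S(1) B(4) by simp
  qed
  have att: "?d \<in> ?A"
  proof -
    obtain B' where B': "B \<subseteq> B'" "B' \<subseteq> x ` {..<r} \<union> B" "independent B'"
      "x ` {..<r} \<union> B \<subseteq> span B'"
      using maximal_independent_subset_extend[of B "x ` {..<r} \<union> B"] B(2) by blast
    have finB': "finite B'" using B'(3) independent_bound_general by blast
    have "span B' = span (x ` {..<r} \<union> K)"
    proof
      show "span B' \<subseteq> span (x ` {..<r} \<union> K)"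
        using B'(2) B(1) by (intro span_mono) auto
      have "K \<subseteq> span B'" using B(3) span_mono[OF B'(1)] by blast
      then show "span (x ` {..<r} \<union> K) \<subseteq> span B'"
        using B'(4) by (intro span_minimal) (auto simp: subspace_span)
    qed
    then have cB': "card B' = dim (x ` {..<r} \<union> K)"
      using dim_eq_card[OF _ B'(3)] by simp
    have "B' - B \<subseteq> x ` {..<r}" using B'(2) by auto
    then obtain S where S: "S \<subseteq> {..<r}" "inj_on x S" "B' - B = x ` S"
      using subset_image_inj by metis
    have finS: "finite S" using S(1) finite_subset by blast
    have cS: "card S = ?d"
      using card_image[OF S(2)] S(3) card_Diff_subset[OF finB B'(1)] cB' B(4) by simp
    have "\<forall>i\<in>S. a i = 0" if "\<forall>j\<in>C. (\<Sum>i\<in>S. a i * M i j) = 0" for a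
    proof -
      have "(\<Sum>i\<in>S. a i *\<^sub>R x i) \<in> span B" using char[OF S(1)] that B(3) by blast
      then obtain u where u: "(\<Sum>i\<in>S. a i *\<^sub>R x i) = (\<Sum>v\<in>B. u v *\<^sub>R v)"
        using span_finite[OF finB] by auto
      define c where "c v = (if v \<in> B then - u v else a (inv_into S x v))" for v
      have disj: "x ` S \<inter> B = {}" using S(3) by auto
      have BB: "B' = x ` S \<union> B" using S(3) B'(1) by auto
      have "(\<Sum>v\<in>B'. c v *\<^sub>R v) = (\<Sum>v\<in>x ` S. c v *\<^sub>R v) + (\<Sum>v\<in>B. c v *\<^sub>R v)"
        unfolding BB by (rule sum.union_disjoint) (use finS finB disj in auto)
      also have "(\<Sum>v\<in>x ` S. c v *\<^sub>R v) = (\<Sum>i\<in>S. c (x i) *\<^sub>R x i)"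
        using sum.reindex[OF S(2), of "\<lambda>v. c v *\<^sub>R v"] by simp
      also have "\<dots> = (\<Sum>i\<in>S. a i *\<^sub>R x i)"
        using disj S(2) by (intro sum.cong) (auto simp: c_def)
      also have "(\<Sum>v\<in>B. c v *\<^sub>R v) = - (\<Sum>v\<in>B. u v *\<^sub>R v)"
        by (simp add: c_def sum_negf)
      finally have "(\<Sum>v\<in>B'. c v *\<^sub>R v) = 0" using u by simp
      then have "\<forall>v\<in>B'. c v = 0" using B'(3) unfolding independent_explicit by blast
      show ?thesis
      proof
        fix i assume i: "i \<in> S"
        then have "x i \<notin> B" "x i \<in> B'" using disj BB by auto
        then have "c (x i) = 0" using \<open>\<forall>v\<in>B'. c v = 0\<close> by blast
        then show "a i = 0" using \<open>x i \<notin> B\<close> inv_into_f_f[OF S(2) i] by (simp add: c_def)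
      qed
    qed
    then have "\<forall>a. (\<forall>j\<in>C. (\<Sum>i\<in>S. a i * M i j) = 0) \<longrightarrow> (\<forall>i\<in>S. a i = 0)" by blast
    then show ?thesis using S(1) cS[symmetric] by blast
  qed
  have fin: "finite ?A"
    by (rule finite_subset[of _ "{..r}"]) (auto intro: card_mono[of "{..<r}", simplified])
  show ?thesis unfolding row_rank_def
    by (rule Max_eqI[OF fin up att])
qed

lemma row_rank_fun:
  fixes x :: "nat \<Rightarrow> 'v::euclidean_space"
  assumes lin: "\<And>c. c \<in> C \<Longrightarrow> linear (g c)"
    and M: "\<And>i c. i < r \<Longrightarrow> c \<in> C \<Longrightarrow> M i c = g c (x i)"
  shows "row_rank r C M = dim (x ` {..<r} \<union> {v. \<forall>c\<in>C. g c v = 0}) - dim {v. \<forall>c\<in>C. g c v = 0}"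
proof (rule row_rank_mod)
  show "subspace {v. \<forall>c\<in>C. g c v = 0}"
    unfolding subspace_def using lin by (auto simp: linear_0 linear_add linear_scale)
  fix S a assume S: "S \<subseteq> {..<r}"
  have "(\<Sum>i\<in>S. a i * M i c) = g c (\<Sum>i\<in>S. a i *\<^sub>R x i)" if c: "c \<in> C" for c
  proof -
    have "g c (\<Sum>i\<in>S. a i *\<^sub>R x i) = (\<Sum>i\<in>S. g c (a i *\<^sub>R x i))"
      by (rule linear_sum[OF lin[OF c]])
    also have "\<dots> = (\<Sum>i\<in>S. a i * M i c)"
      using S c by (intro sum.cong) (auto simp: linear_scale[OF lin[OF c]] M)
    finally show ?thesis by simp
  qed
  then show "(\<forall>j\<in>C. (\<Sum>i\<in>S. a i * M i j) = 0) \<longleftrightarrow> (\<Sum>i\<in>S. a i *\<^sub>R x i) \<in> {v. \<forall>c\<in>C. g c v = 0}"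
    by auto
qed

lemma dim_zero_union: "dim (A \<union> {v::'v::euclidean_space. v = 0}) = dim A"
proof -
  have "A \<union> {v. v = 0} = insert 0 A" by auto
  then show ?thesis by (metis dim_span span_insert_0)
qed

lemma kernel_dim:
  fixes g :: "'i \<Rightarrow> 'v::euclidean_space \<Rightarrow> real"
  assumes fin: "finite J" and lin: "\<And>i. i \<in> J \<Longrightarrow> linear (g i)"
    and ind: "\<And>c. (\<forall>v. (\<Sum>i\<in>J. c i * g i v) = 0) \<Longrightarrow> \<forall>i\<in>J. c i = 0"
  shows "dim {v. \<forall>i\<in>J. g i v = 0} + card J = DIM('v)"
proof -
  define w where "w i = (\<Sum>b\<in>Basis. g i b *\<^sub>R b)" for i
  have rep: "g i v = w i \<bullet> v" if i: "i \<in> J" for i v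
  proof -
    have "g i v = g i (\<Sum>b\<in>Basis. (v \<bullet> b) *\<^sub>R b)" by (simp add: euclidean_representation)
    also have "\<dots> = (\<Sum>b\<in>Basis. (v \<bullet> b) * g i b)"
      by (simp add: linear_sum[OF lin[OF i]] linear_scale[OF lin[OF i]])
    also have "\<dots> = w i \<bullet> v"
      by (simp add: w_def inner_sum_right inner_commute mult.commute)
    finally show ?thesis .
  qed
  have wind: "\<forall>i\<in>J. c i = 0" if "(\<Sum>i\<in>J. c i *\<^sub>R w i) \<in> {0}" for c
  proof (rule ind, rule allI)
    fix v
    have "(\<Sum>i\<in>J. c i * g i v) = (\<Sum>i\<in>J. c i *\<^sub>R w i) \<bullet> v"
      by (simp add: inner_sum_left rep)
    then show "(\<Sum>i\<in>J. c i * g i v) = 0" using that by simp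
  qed
  have im: "inj_on w J" "independent (w ` J \<union> {})"
  proof -
    have w0: "\<And>a. (\<Sum>i\<in>J. a i *\<^sub>R w i) \<in> {0} \<Longrightarrow> \<forall>i\<in>J. a i = 0" by (rule wind)
    show "inj_on w J" by (rule indep_mod(1)[OF fin subspace_single_0 _ independent_empty w0]) simp
    show "independent (w ` J \<union> {})" by (rule indep_mod(3)[OF fin subspace_single_0 _ independent_empty w0]) simp
  qed
  have dw: "dim (w ` J) = card J"
    using dim_eq_card_independent[of "w ` J"] im card_image[OF im(1)] by simp
  have ker: "{v. \<forall>i\<in>J. g i v = 0} = {y \<in> UNIV. \<forall>x\<in>span (w ` J). orthogonal x y}"
  proof (intro set_eqI iffI)
    fix v assume "v \<in> {v. \<forall>i\<in>J. g i v = 0}"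
    then have "\<And>y. y \<in> w ` J \<Longrightarrow> orthogonal v y"
      using rep by (auto simp: orthogonal_def inner_commute)
    then show "v \<in> {y \<in> UNIV. \<forall>x\<in>span (w ` J). orthogonal x y}"
      using orthogonal_to_span orthogonal_commute by blast
  next
    fix v assume "v \<in> {y \<in> UNIV. \<forall>x\<in>span (w ` J). orthogonal x y}"
    then have v: "\<And>x. x \<in> span (w ` J) \<Longrightarrow> orthogonal x v" by blast
    have "g i v = 0" if i: "i \<in> J" for i
    proof -
      have "w i \<in> span (w ` J)" using i by (intro span_base) blast
      then have "w i \<bullet> v = 0" using v unfolding orthogonal_def by blast
      then show ?thesis using rep[OF i] by simp
    qed
    then show "v \<in> {v. \<forall>i\<in>J. g i v = 0}" by blast
  qed
  have "dim {y \<in> UNIV. \<forall>x\<in>span (w ` J). orthogonal x y} + dim (span (w ` J)) = dim (UNIV::'v set)"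
    by (rule dim_subspace_orthogonal_to_vectors) (auto simp: subspace_span subspace_UNIV)
  then show ?thesis
    unfolding ker[symmetric] dim_span dw dim_UNIV by simp
qed



lemma dim_union_span:
  fixes A B :: "'v::euclidean_space set"
  assumes "B \<subseteq> span A" shows "dim (A \<union> span B) = dim A"
proof -
  have "span (A \<union> span B) = span A"
  proof (rule subset_antisym)
    have "span B \<subseteq> span A" using assms by (simp add: span_minimal subspace_span)
    then show "span (A \<union> span B) \<subseteq> span A" by (simp add: span_minimal span_superset subspace_span)
    show "span A \<subseteq> span (A \<union> span B)" by (intro span_mono) auto
  qed
  then show ?thesis by (metis dim_span)
qed

lemma dim_zero_set: "dim {v::'v::euclidean_space. v = 0} = 0"
proof -
  have "{v::'v. v = 0} = {0}" by auto
  then show ?thesis by simp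
qed

lemma xieta_rank:
  fixes X :: "nat \<Rightarrow> ('n::finite,'m::finite) field"
  shows "row_rank k UNIV (xieta_mat X p) = dim ((\<lambda>a. X a p) ` {..<k})"
proof -
  define g :: "'n + 'm \<Rightarrow> ('n,'m) pt \<Rightarrow> real" where
    "g c v = (case c of Inl i \<Rightarrow> fst v $ i | Inr j \<Rightarrow> snd v $ j)" for c v
  have lin: "linear (g c)" for c
    by (cases c) (auto simp: g_def intro!: linearI)
  have M: "xieta_mat X p a c = g c (X a p)" for a c
    by (simp add: xieta_mat_def g_def)
  have ker: "{v. \<forall>c\<in>UNIV. g c v = 0} = {v. v = 0}"
  proof (intro set_eqI iffI)
    fix v assume "v \<in> {v. \<forall>c\<in>UNIV. g c v = 0}"
    then have h: "\<And>c. g c v = 0" by blast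
    have "\<forall>i. fst v $ i = 0" using h[of "Inl _"] by (simp add: g_def)
    moreover have "\<forall>j. snd v $ j = 0" using h[of "Inr _"] by (simp add: g_def)
    ultimately have "fst v = 0" "snd v = 0" by (simp_all add: vec_eq_iff)
    then show "v \<in> {v. v = 0}" by (simp add: prod_eq_iff)
  qed (auto simp: g_def split: sum.split)
  show ?thesis
    using row_rank_fun[of UNIV g k "xieta_mat X p" "\<lambda>a. X a p"] lin M
    unfolding ker dim_zero_union dim_zero_set by simp
qed

lemma xi_rank:
  fixes X :: "nat \<Rightarrow> ('n::finite,'m::finite) field"
  shows "row_rank k UNIV (xi_mat X p) = dim ((\<lambda>a. fst (X a p)) ` {..<k})"
proof -
  define g :: "'n \<Rightarrow> real^'n \<Rightarrow> real" where "g i v = v $ i" for i v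
  have lin: "linear (g c)" for c
    by (auto simp: g_def intro!: linearI)
  have M: "xi_mat X p a c = g c (fst (X a p))" for a c
    by (simp add: xi_mat_def g_def)
  have ker: "{v. \<forall>c\<in>UNIV. g c v = 0} = {v. v = 0}"
    by (auto simp: g_def vec_eq_iff)
  show ?thesis
    using row_rank_fun[of UNIV g k "xi_mat X p" "\<lambda>a. fst (X a p)"] lin M
    unfolding ker dim_zero_union dim_zero_set by simp
qed

lemma Max_minus:
  fixes f :: "'p \<Rightarrow> nat"
  assumes "finite (f ` D)" "D \<noteq> {}"
  shows "Max ((\<lambda>p. f p - c) ` D) = Max (f ` D) - c"
proof -
  have "(\<lambda>p. f p - c) ` D = (\<lambda>x. x - c) ` (f ` D)" by (simp add: image_image)
  moreover have "mono (\<lambda>x::nat. x - c)" by (rule monoI) simp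
  ultimately show ?thesis using mono_Max_commute[of "\<lambda>x::nat. x - c" "f ` D"] assms by simp
qed



lemma subspace_ker:
  assumes "\<And>c. c \<in> C \<Longrightarrow> linear (g c)"
  shows "subspace {v. \<forall>c\<in>C. g c v = 0}"
  unfolding subspace_def using assms by (auto simp: linear_0 linear_add linear_scale)

theorem lemma4:
  fixes D :: "('n::finite,'m::finite) pt set"
    and X Y :: "nat \<Rightarrow> ('n,'m) field"
    and k kH \<sigma> \<mu> :: nat
    and lam :: "nat \<Rightarrow> real^'n \<Rightarrow> real"
    and I :: "nat \<Rightarrow> ('n,'m) pt \<Rightarrow> real"
  assumes "open D" and "D \<noteq> {}"
    and "lie_algebra_basis D k X"
    and "ideal_basis D k X kH Y"
    and "regular_ranks D kH Y"
    and "rank_xi D kH Y \<noteq> rank_xieta D kH Y"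
    and "H_invariants D kH Y \<sigma> lam \<mu> I"
    and "NH_invariant_solution_condition D k X \<sigma> lam \<mu> I"
  shows "int (rank_xieta D k X) - int (rank_xi D k X)
         = int (rank_xieta D kH Y) - int (rank_xi D kH Y)"
proof -
  define XP where "XP p = (\<lambda>a. X a p) ` {..<k}" for p
  define FX where "FX p = (\<lambda>a. fst (X a p)) ` {..<k}" for p
  define YP where "YP p = (\<lambda>b. Y b p) ` {..<kH}" for p
  define FY where "FY p = (\<lambda>b. fst (Y b p)) ` {..<kH}" for p
  define cH where "cH = rank_xieta D kH Y"
  define dH where "dH = rank_xi D kH Y"
  have reg: "dim (YP p) = cH" "dim (FY p) = dH" if "p \<in> D" for p
    using assms(5) that unfolding regular_ranks_def YP_def FY_def cH_def dH_def xieta_rank xi_rank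
    by auto
  note HI = assms(7)[unfolded H_invariants_def]
  have HIlam: "\<forall>j<\<sigma>. c j = 0" if "p \<in> D" "\<forall>v. (\<Sum>j<\<sigma>. c j * frechet_derivative (lam j) (at (fst p)) v) = 0" for p c
    using HI that by blast
  have HII: "\<forall>l<\<mu>. c l = 0" if "p \<in> D" "\<forall>w. (\<Sum>l<\<mu>. c l * frechet_derivative (I l) (at p) (0, w)) = 0" for p c
    using HI that by blast
  have sig: "\<sigma> = CARD('n) - dH"
    using conjunct1[OF HI] unfolding dH_def .
  have mu: "\<mu> = CARD('m) + CARD('n) - cH - \<sigma>"
    using conjunct1[OF conjunct2[OF HI]] unfolding cH_def .
  have Ycomb: "\<exists>c. Y b p = (\<Sum>a<k. c a *\<^sub>R X a p)" if pD: "p \<in> D" and bk: "b < kH" for p b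
  proof -
    obtain c where "\<forall>p\<in>D. Y b p = (\<Sum>a<k. c a *\<^sub>R X a p)"
      using assms(4) bk unfolding ideal_basis_def by blast
    then show ?thesis using pD by blast
  qed
  have YPsub: "YP p \<subseteq> span (XP p)" if p: "p \<in> D" for p
  proof
    fix y assume "y \<in> YP p"
    then obtain b where b: "b < kH" "y = Y b p" unfolding YP_def by auto
    obtain c where c: "Y b p = (\<Sum>a<k. c a *\<^sub>R X a p)" using Ycomb[OF p b(1)] by blast
    have "(\<Sum>a<k. c a *\<^sub>R X a p) \<in> span (XP p)" unfolding XP_def
      by (rule span_sum, rule span_scale, rule span_base) auto
    then show "y \<in> span (XP p)" using b(2) c by simp
  qed
  have FYsub: "FY p \<subseteq> span (FX p)" if p: "p \<in> D" for p
  proof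
    fix y assume "y \<in> FY p"
    then obtain b where b: "b < kH" "y = fst (Y b p)" unfolding FY_def by auto
    obtain c where "Y b p = (\<Sum>a<k. c a *\<^sub>R X a p)" using Ycomb[OF p b(1)] by blast
    then have y: "y = (\<Sum>a<k. c a *\<^sub>R fst (X a p))" using b(2) by (simp add: fst_sum)
    have "(\<Sum>a<k. c a *\<^sub>R fst (X a p)) \<in> span (FX p)" unfolding FX_def
      by (rule span_sum, rule span_scale, rule span_base) auto
    then show "y \<in> span (FX p)" using y by simp
  qed
  have linlam: "linear (frechet_derivative (lam j) (at (fst p)))" if "p \<in> D" "j < \<sigma>" for p j
    using HI that has_derivative_linear frechet_derivative_works by blast
  have linI: "linear (frechet_derivative (I l) (at p))" if "p \<in> D" "l < \<mu>" for p l
    using HI that has_derivative_linear frechet_derivative_works by blast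
  have ixi: "row_rank k {..<\<sigma>} (induced_xi lam X p) = dim (FX p) - dH" if p: "p \<in> D" for p
  proof -
    define g where "g j = frechet_derivative (lam j) (at (fst p))" for j
    define Z where "Z = {v. \<forall>j\<in>{..<\<sigma>}. g j v = 0}"
    have lg: "\<And>j. j \<in> {..<\<sigma>} \<Longrightarrow> linear (g j)" using linlam[OF p] by (simp add: g_def)
    have rr: "row_rank k {..<\<sigma>} (induced_xi lam X p) = dim (FX p \<union> Z) - dim Z"
      unfolding Z_def FX_def
      by (rule row_rank_fun) (use lg in \<open>auto simp: induced_xi_def g_def\<close>)
    have kd: "dim Z + card {..<\<sigma>} = DIM(real^'n)"
      unfolding Z_def
    proof (rule kernel_dim)
      fix c assume "\<forall>v. (\<Sum>i\<in>{..<\<sigma>}. c i * g i v) = 0"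
      then show "\<forall>i\<in>{..<\<sigma>}. c i = 0" using HI p by (auto simp: g_def)
    qed (use lg in auto)
    have FYZ: "FY p \<subseteq> Z" using HI p unfolding FY_def Z_def g_def by auto
    have "dim (FY p) \<le> CARD('n)" using dim_subset_UNIV[of "FY p"] by simp
    then have "dim Z = dim (FY p)" using kd sig reg(2)[OF p] by simp
    then have "span (FY p) = span Z" using dim_eq_span[OF FYZ] by simp
    moreover have "span Z = Z" unfolding Z_def by (rule span_eq_iff[THEN iffD2], rule subspace_ker) (rule lg)
    ultimately have "Z = span (FY p)" by simp
    then show ?thesis using rr dim_union_span[OF FYsub[OF p]] reg(2)[OF p] by simp
  qed
  have ixieta: "row_rank k (Inl ` {..<\<sigma>} \<union> Inr ` {..<\<mu>}) (induced_xieta lam I X p) = dim (XP p) - cH"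
    if p: "p \<in> D" for p
  proof -
    define C where "C = Inl ` {..<\<sigma>} \<union> Inr ` {..<\<mu>}"
    define g where "g c v = (case c of Inl j \<Rightarrow> frechet_derivative (lam j) (at (fst p)) (fst v)
                                    | Inr l \<Rightarrow> frechet_derivative (I l) (at p) v)" for c v
    define Z where "Z = {v. \<forall>c\<in>C. g c v = 0}"
    have lg: "linear (g c)" if "c \<in> C" for c
    proof -
      { fix j assume j: "j < \<sigma>" "c = Inl j"
        have "linear (frechet_derivative (lam j) (at (fst p)) \<circ> fst)"
          by (rule linear_compose[OF linear_fst linlam[OF p j(1)]])
        moreover have "g c = frechet_derivative (lam j) (at (fst p)) \<circ> fst"
          by (simp add: g_def j(2) fun_eq_iff)
        ultimately have ?thesis by simp }
      moreover
      { fix l assume l: "l < \<mu>" "c = Inr l"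
        have "g c = frechet_derivative (I l) (at p)"
          by (simp add: g_def l(2) fun_eq_iff)
        then have ?thesis using linI[OF p l(1)] by simp }
      ultimately show ?thesis using that unfolding C_def by blast
    qed
    have rr: "row_rank k C (induced_xieta lam I X p) = dim (XP p \<union> Z) - dim Z"
      unfolding Z_def XP_def
      by (rule row_rank_fun[of C g], rule lg, assumption) (auto simp: induced_xieta_def g_def split: sum.split)
    have kd: "dim Z + card C = DIM(('n,'m) pt)"
      unfolding Z_def
    proof (rule kernel_dim)
      show "finite C" by (simp add: C_def)
    next
      fix cc assume h: "\<forall>v. (\<Sum>i\<in>C. cc i * g i v) = 0"
      have split: "(\<Sum>i\<in>C. cc i * g i v) =
          (\<Sum>j<\<sigma>. cc (Inl j) * frechet_derivative (lam j) (at (fst p)) (fst v)) +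
          (\<Sum>l<\<mu>. cc (Inr l) * frechet_derivative (I l) (at p) v)" for v
      proof -
        have "(\<Sum>i\<in>C. cc i * g i v) = (\<Sum>i\<in>Inl ` {..<\<sigma>}. cc i * g i v) + (\<Sum>i\<in>Inr ` {..<\<mu>}. cc i * g i v)"
          unfolding C_def by (rule sum.union_disjoint) auto
        also have "\<dots> = (\<Sum>j<\<sigma>. cc (Inl j) * g (Inl j) v) + (\<Sum>l<\<mu>. cc (Inr l) * g (Inr l) v)"
          by (simp add: sum.reindex)
        finally show ?thesis by (simp add: g_def)
      qed
      have l0: "frechet_derivative (lam j) (at (fst p)) 0 = 0" if "j < \<sigma>" for j
        using linlam[OF p that] linear_0 by blast
      have rw: "(\<Sum>l<\<mu>. cc (Inr l) * frechet_derivative (I l) (at p) (0, w)) = 0" for w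
        using h[rule_format, of "(0, w)"] unfolding split by (simp add: l0)
      have r0: "\<forall>l<\<mu>. cc (Inr l) = 0" by (rule HII[OF p]) (simp add: rw)
      have lw: "(\<Sum>j<\<sigma>. cc (Inl j) * frechet_derivative (lam j) (at (fst p)) x) = 0" for x
        using h[rule_format, of "(x, 0)"] unfolding split by (simp add: r0)
      have l0': "\<forall>j<\<sigma>. cc (Inl j) = 0" by (rule HIlam[OF p]) (simp add: lw)
      show "\<forall>i\<in>C. cc i = 0" using r0 l0' unfolding C_def by auto
    qed (use lg in auto)
    have cC: "card C = \<sigma> + \<mu>"
      unfolding C_def by (subst card_Un_disjoint) (auto simp: card_image)
    have YZ: "YP p \<subseteq> Z"
    proof
      fix y assume "y \<in> YP p"
      then obtain b where b: "b < kH" "y = Y b p" unfolding YP_def by auto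
      show "y \<in> Z" unfolding Z_def C_def g_def using HI p b by auto
    qed
    have sZ: "span Z = Z" unfolding Z_def by (rule span_eq_iff[THEN iffD2], rule subspace_ker) (rule lg)
    have "dim (YP p) \<le> dim Z" using dim_subset[OF YZ] .
    then have "dim Z = dim (YP p)" using kd cC mu reg(1)[OF p] by simp
    then have "span (YP p) = span Z" using dim_eq_span[OF YZ] by simp
    then have "Z = span (YP p)" using sZ by simp
    then show ?thesis using rr dim_union_span[OF YPsub[OF p]] reg(1)[OF p] unfolding C_def by simp
  qed
  define fa where "fa p = dim (XP p)" for p
  define fb where "fb p = dim (FX p)" for p
  have ra: "rank_xieta D k X = Max (fa ` D)"
    unfolding rank_xieta_def max_rank_def xieta_rank fa_def XP_def ..
  have rb: "rank_xi D k X = Max (fb ` D)"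
    unfolding rank_xi_def max_rank_def xi_rank fb_def FX_def ..
  have fab: "fa p \<le> DIM(('n,'m) pt)" for p unfolding fa_def by (rule dim_subset_UNIV)
  have finA: "finite (fa ` D)"
    by (rule finite_subset[of _ "{..DIM(('n,'m) pt)}"]) (use fab in auto)
  have fbb: "fb p \<le> DIM(real^'n)" for p unfolding fb_def by (rule dim_subset_UNIV)
  have finB: "finite (fb ` D)"
    by (rule finite_subset[of _ "{..DIM(real^'n)}"]) (use fbb in auto)
  have i1: "(\<lambda>p. row_rank k {..<\<sigma>} (induced_xi lam X p)) ` D = (\<lambda>p. fb p - dH) ` D"
    by (rule image_cong) (simp_all add: ixi fb_def)
  have i2: "(\<lambda>p. row_rank k (Inl ` {..<\<sigma>} \<union> Inr ` {..<\<mu>}) (induced_xieta lam I X p)) ` D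
      = (\<lambda>p. fa p - cH) ` D"
    by (rule image_cong) (simp_all add: ixieta fa_def)
  have "Max ((\<lambda>p. fb p - dH) ` D) = Max ((\<lambda>p. fa p - cH) ` D)"
    using assms(8) unfolding NH_invariant_solution_condition_def max_rank_def i1 i2 .
  then have eq: "Max (fb ` D) - dH = Max (fa ` D) - cH"
    using Max_minus[OF finA assms(2), of cH] Max_minus[OF finB assms(2), of dH] by argo
  obtain p0 where p0: "p0 \<in> D" using assms(2) by blast
  have "cH \<le> fa p0"
    using reg(1)[OF p0] dim_subset[OF YPsub[OF p0]] unfolding fa_def dim_span by argo
  also have "fa p0 \<le> Max (fa ` D)" using finA p0 by (intro Max_ge) auto
  finally have ca: "cH \<le> Max (fa ` D)" .
  have "dH \<le> fb p0"
    using reg(2)[OF p0] dim_subset[OF FYsub[OF p0]] unfolding fb_def dim_span by argo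
  also have "fb p0 \<le> Max (fb ` D)" using finB p0 by (intro Max_ge) auto
  finally have cb: "dH \<le> Max (fb ` D)" .
  show ?thesis unfolding ra rb cH_def[symmetric] dH_def[symmetric]
    using eq ca cb by linarith
qed

end
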